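(* The category $\sigma\mathbb{RS}$ of Dedekind $\sigma$-complete Riesz spaces with $\sigma$-continuous Riesz morphisms is isomorphic to the variety $\mathcal{V}_{\sigma\mathbb{RS}}$: the functor $T\colon\mathcal{V}_{\sigma\mathbb{RS}}\to\sigma\mathbb{RS}$ forgetting $\bigvee^-$ (identity on maps) and the functor $E\colon\sigma\mathbb{RS}\to\mathcal{V}_{\sigma\mathbb{RS}}$ adding $\bigvee^-(g,f_1,f_2,\dots):=\sup_{n\ge1}\{f_n\wedge g\}$ (identity on maps) are well defined and mutually inverse. In particular the category of Dedekind $\sigma$-complete Riesz spaces is an infinitary variety.
   Context: A Riesz space is Dedekind $\sigma$-complete if every countable subset with an upper bound has a supremum; a Riesz morphism (linear lattice homomorphism) is $\sigma$-continuous if it preserves all existing countable suprema. $\mathcal{V}_{\sigma\mathbb{RS}}$ is the infinitary variety of algebras with the Riesz space operations ($0,+,-,\vee,\wedge$ and scalar multiplications $\lambda\cdot-$ for $\lambda\in\mathbb{R}$) plus an operation $\bigvee^-$ of countably infinite arity, writing $\bigvee_{n\ge1}^g f_n:=\bigvee^-(g,f_1,f_2,\dots)$, satisfying the Riesz space axioms and (A1) $\bigvee_{n\ge1}^g f_n=\bigvee_{n\ge1}^g(f_n\wedge g)$; (A2) $\bigvee_{n\ge1}^g f_n=(f_1\wedge g)\vee\bigvee^-(g,f_2,f_3,\dots)$; (A3) $\bigvee_{n\ge1}^g(f_n\wedge h)\le h$ ($a\le b$ meaning $a\wedge b=a$). Morphisms preserve all operations. *)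

theory Defs
  imports Complex_Main "HOL-Library.Countable_Set"
begin

record 'a riesz_struct =
  rcarrier :: "'a set"
  rzero :: 'a
  radd :: "'a \<Rightarrow> 'a \<Rightarrow> 'a"
  rneg :: "'a \<Rightarrow> 'a"
  rjoin :: "'a \<Rightarrow> 'a \<Rightarrow> 'a"
  rmeet :: "'a \<Rightarrow> 'a \<Rightarrow> 'a"
  rscal :: "real \<Rightarrow> 'a \<Rightarrow> 'a"

text \<open>Algebras of the infinitary signature: Riesz operations plus \<open>\<Or>\<^sup>-\<close> of countable arity;
  \<open>vsup A g f\<close> stands for \<open>\<Or>\<^sup>-(g, f 0, f 1, \<dots>)\<close>, i.e. \<open>f n\<close> is the paper's \<open>f_(n+1)\<close>.\<close>
record 'a vsig_struct = "'a riesz_struct" +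
  vsup :: "'a \<Rightarrow> (nat \<Rightarrow> 'a) \<Rightarrow> 'a"

definition rle :: "('a, 'm) riesz_struct_scheme \<Rightarrow> 'a \<Rightarrow> 'a \<Rightarrow> bool" where
  "rle R a b \<longleftrightarrow> rmeet R a b = a"

definition riesz_space :: "('a, 'm) riesz_struct_scheme \<Rightarrow> bool" where
  "riesz_space R \<longleftrightarrow>
    (let C = rcarrier R; add = radd R; z = rzero R; ng = rneg R;
         jn = rjoin R; mt = rmeet R; sc = rscal R in
     z \<in> C \<and>
     (\<forall>x\<in>C. \<forall>y\<in>C. add x y \<in> C \<and> jn x y \<in> C \<and> mt x y \<in> C) \<and>
     (\<forall>x\<in>C. ng x \<in> C \<and> (\<forall>c. sc c x \<in> C)) \<and>
     \<comment> \<open>abelian group\<close>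
     (\<forall>x\<in>C. \<forall>y\<in>C. \<forall>w\<in>C. add (add x y) w = add x (add y w)) \<and>
     (\<forall>x\<in>C. \<forall>y\<in>C. add x y = add y x) \<and>
     (\<forall>x\<in>C. add z x = x) \<and>
     (\<forall>x\<in>C. add (ng x) x = z) \<and>
     \<comment> \<open>real vector space\<close>
     (\<forall>x\<in>C. \<forall>y\<in>C. \<forall>a. sc a (add x y) = add (sc a x) (sc a y)) \<and>
     (\<forall>x\<in>C. \<forall>a b. sc (a + b) x = add (sc a x) (sc b x)) \<and>
     (\<forall>x\<in>C. \<forall>a b. sc a (sc b x) = sc (a * b) x) \<and>
     (\<forall>x\<in>C. sc 1 x = x) \<and>
     \<comment> \<open>lattice\<close>
     (\<forall>x\<in>C. \<forall>y\<in>C. jn x y = jn y x \<and> mt x y = mt y x) \<and>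
     (\<forall>x\<in>C. \<forall>y\<in>C. \<forall>w\<in>C. jn (jn x y) w = jn x (jn y w) \<and> mt (mt x y) w = mt x (mt y w)) \<and>
     (\<forall>x\<in>C. \<forall>y\<in>C. jn x (mt x y) = x \<and> mt x (jn x y) = x) \<and>
     \<comment> \<open>compatibility of order and linear structure\<close>
     (\<forall>x\<in>C. \<forall>y\<in>C. \<forall>w\<in>C. rle R x y \<longrightarrow> rle R (add x w) (add y w)) \<and>
     (\<forall>x\<in>C. \<forall>y\<in>C. \<forall>a. 0 \<le> a \<and> rle R x y \<longrightarrow> rle R (sc a x) (sc a y)))"

definition is_sup :: "('a, 'm) riesz_struct_scheme \<Rightarrow> 'a set \<Rightarrow> 'a \<Rightarrow> bool" where
  "is_sup R S s \<longleftrightarrow> s \<in> rcarrier R \<and> (\<forall>x\<in>S. rle R x s) \<and>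
     (\<forall>u\<in>rcarrier R. (\<forall>x\<in>S. rle R x u) \<longrightarrow> rle R s u)"

definition dedekind_sigma_complete :: "('a, 'm) riesz_struct_scheme \<Rightarrow> bool" where
  "dedekind_sigma_complete R \<longleftrightarrow>
    (\<forall>S. countable S \<and> S \<noteq> {} \<and> S \<subseteq> rcarrier R \<and> (\<exists>u\<in>rcarrier R. \<forall>x\<in>S. rle R x u)
         \<longrightarrow> (\<exists>s. is_sup R S s))"

definition sigma_riesz :: "('a, 'm) riesz_struct_scheme \<Rightarrow> bool" where
  "sigma_riesz R \<longleftrightarrow> riesz_space R \<and> dedekind_sigma_complete R"

definition riesz_hom :: "('a, 'm) riesz_struct_scheme \<Rightarrow> ('b, 'n) riesz_struct_scheme \<Rightarrow> ('a \<Rightarrow> 'b) \<Rightarrow> bool" where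
  "riesz_hom R S h \<longleftrightarrow>
     (\<forall>x\<in>rcarrier R. h x \<in> rcarrier S) \<and>
     h (rzero R) = rzero S \<and>
     (\<forall>x\<in>rcarrier R. \<forall>y\<in>rcarrier R.
        h (radd R x y) = radd S (h x) (h y) \<and>
        h (rjoin R x y) = rjoin S (h x) (h y) \<and>
        h (rmeet R x y) = rmeet S (h x) (h y)) \<and>
     (\<forall>x\<in>rcarrier R. h (rneg R x) = rneg S (h x) \<and> (\<forall>c. h (rscal R c x) = rscal S c (h x)))"

definition sigma_continuous :: "('a, 'm) riesz_struct_scheme \<Rightarrow> ('b, 'n) riesz_struct_scheme \<Rightarrow> ('a \<Rightarrow> 'b) \<Rightarrow> bool" where
  "sigma_continuous R S h \<longleftrightarrow>
     (\<forall>A s. countable A \<and> A \<noteq> {} \<and> A \<subseteq> rcarrier R \<and> is_sup R A s \<longrightarrow> is_sup S (h ` A) (h s))"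

definition sigma_riesz_hom :: "('a, 'm) riesz_struct_scheme \<Rightarrow> ('b, 'n) riesz_struct_scheme \<Rightarrow> ('a \<Rightarrow> 'b) \<Rightarrow> bool" where
  "sigma_riesz_hom R S h \<longleftrightarrow> riesz_hom R S h \<and> sigma_continuous R S h"

definition V_alg :: "'a vsig_struct \<Rightarrow> bool" where
  "V_alg A \<longleftrightarrow> riesz_space A \<and>
    (\<forall>g\<in>rcarrier A. \<forall>f. range f \<subseteq> rcarrier A \<longrightarrow>
       vsup A g f \<in> rcarrier A \<and>
       \<comment> \<open>(A1)\<close>
       vsup A g f = vsup A g (\<lambda>n. rmeet A (f n) g) \<and>
       \<comment> \<open>(A2)\<close>
       vsup A g f = rjoin A (rmeet A (f 0) g) (vsup A g (\<lambda>n. f (Suc n))) \<and>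
       \<comment> \<open>(A3)\<close>
       (\<forall>h\<in>rcarrier A. rle A (vsup A g (\<lambda>n. rmeet A (f n) h)) h))"

definition V_hom :: "'a vsig_struct \<Rightarrow> 'b vsig_struct \<Rightarrow> ('a \<Rightarrow> 'b) \<Rightarrow> bool" where
  "V_hom A B h \<longleftrightarrow> riesz_hom A B h \<and>
     (\<forall>g\<in>rcarrier A. \<forall>f. range f \<subseteq> rcarrier A \<longrightarrow> h (vsup A g f) = vsup B (h g) (h \<circ> f))"

section \<open>The functors (on objects; both are the identity on maps)\<close>

definition T_obj :: "'a vsig_struct \<Rightarrow> 'a riesz_struct" where
  "T_obj A = \<lparr>rcarrier = rcarrier A, rzero = rzero A, radd = radd A, rneg = rneg A,
               rjoin = rjoin A, rmeet = rmeet A, rscal = rscal A\<rparr>"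

definition E_obj :: "'a riesz_struct \<Rightarrow> 'a vsig_struct" where
  "E_obj R = \<lparr>rcarrier = rcarrier R, rzero = rzero R, radd = radd R, rneg = rneg R,
               rjoin = rjoin R, rmeet = rmeet R, rscal = rscal R,
               vsup = (\<lambda>g f. THE s. is_sup R (range (\<lambda>n. rmeet R (f n) g)) s)\<rparr>"

end

theory Submission
  imports Defs
begin

context
  fixes R :: "('a, 'm) riesz_struct_scheme"
  assumes RS: "riesz_space R"
begin


lemma mt_cl: "x \<in> rcarrier R \<Longrightarrow> y \<in> rcarrier R \<Longrightarrow> rmeet R x y \<in> rcarrier R"
  using RS unfolding riesz_space_def Let_def by auto
lemma jn_cl: "x \<in> rcarrier R \<Longrightarrow> y \<in> rcarrier R \<Longrightarrow> rjoin R x y \<in> rcarrier R"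
  using RS unfolding riesz_space_def Let_def by auto
lemma mt_comm: "x \<in> rcarrier R \<Longrightarrow> y \<in> rcarrier R \<Longrightarrow> rmeet R x y = rmeet R y x"
  using RS unfolding riesz_space_def Let_def by auto
lemma jn_comm: "x \<in> rcarrier R \<Longrightarrow> y \<in> rcarrier R \<Longrightarrow> rjoin R x y = rjoin R y x"
  using RS unfolding riesz_space_def Let_def by auto
lemma mt_assoc: "x \<in> rcarrier R \<Longrightarrow> y \<in> rcarrier R \<Longrightarrow> z \<in> rcarrier R \<Longrightarrow> rmeet R (rmeet R x y) z = rmeet R x (rmeet R y z)"
  using RS unfolding riesz_space_def Let_def by auto
lemma jn_assoc: "x \<in> rcarrier R \<Longrightarrow> y \<in> rcarrier R \<Longrightarrow> z \<in> rcarrier R \<Longrightarrow> rjoin R (rjoin R x y) z = rjoin R x (rjoin R y z)"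
  using RS unfolding riesz_space_def Let_def by auto
lemma absorb1: "x \<in> rcarrier R \<Longrightarrow> y \<in> rcarrier R \<Longrightarrow> rjoin R x (rmeet R x y) = x"
  using RS unfolding riesz_space_def Let_def by auto
lemma absorb2: "x \<in> rcarrier R \<Longrightarrow> y \<in> rcarrier R \<Longrightarrow> rmeet R x (rjoin R x y) = x"
  using RS unfolding riesz_space_def Let_def by auto

lemma mt_idem: "x \<in> rcarrier R \<Longrightarrow> rmeet R x x = x"
  by (metis absorb1 absorb2 mt_cl)

lemma le_refl: "x \<in> rcarrier R \<Longrightarrow> rle R x x"
  by (simp add: rle_def mt_idem)

lemma le_antisym: "x \<in> rcarrier R \<Longrightarrow> y \<in> rcarrier R \<Longrightarrow> rle R x y \<Longrightarrow> rle R y x \<Longrightarrow> x = y"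
  unfolding rle_def by (metis mt_comm)

lemma le_trans: "x \<in> rcarrier R \<Longrightarrow> y \<in> rcarrier R \<Longrightarrow> z \<in> rcarrier R \<Longrightarrow> rle R x y \<Longrightarrow> rle R y z \<Longrightarrow> rle R x z"
  unfolding rle_def by (metis mt_assoc)

lemma mt_le1: "x \<in> rcarrier R \<Longrightarrow> y \<in> rcarrier R \<Longrightarrow> rle R (rmeet R x y) x"
  unfolding rle_def by (metis mt_assoc mt_comm mt_idem)

lemma mt_le2: "x \<in> rcarrier R \<Longrightarrow> y \<in> rcarrier R \<Longrightarrow> rle R (rmeet R x y) y"
  unfolding rle_def by (metis mt_assoc mt_idem)

lemma jn_ge1: "x \<in> rcarrier R \<Longrightarrow> y \<in> rcarrier R \<Longrightarrow> rle R x (rjoin R x y)"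
  unfolding rle_def by (metis absorb2)

lemma jn_ge2: "x \<in> rcarrier R \<Longrightarrow> y \<in> rcarrier R \<Longrightarrow> rle R y (rjoin R x y)"
  unfolding rle_def by (metis absorb2 jn_comm)

lemma le_jn_eq: "x \<in> rcarrier R \<Longrightarrow> z \<in> rcarrier R \<Longrightarrow> rle R x z \<Longrightarrow> rjoin R x z = z"
  unfolding rle_def by (metis absorb1 jn_comm mt_comm)

lemma jn_least: "x \<in> rcarrier R \<Longrightarrow> y \<in> rcarrier R \<Longrightarrow> z \<in> rcarrier R \<Longrightarrow> rle R x z \<Longrightarrow> rle R y z \<Longrightarrow> rle R (rjoin R x y) z"
proof -
  assume a: "x \<in> rcarrier R" "y \<in> rcarrier R" "z \<in> rcarrier R" "rle R x z" "rle R y z"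
  have "rjoin R (rjoin R x y) z = z" using a by (simp add: jn_assoc le_jn_eq)
  then show ?thesis unfolding rle_def using a by (metis absorb2 jn_cl)
qed

lemma le_mt_eq: "rle R x y \<Longrightarrow> rmeet R x y = x"
  by (simp add: rle_def)

lemma sup_unique: "is_sup R S a \<Longrightarrow> is_sup R S b \<Longrightarrow> a = b"
  unfolding is_sup_def by (meson le_antisym)

end


lemma T_fields[simp]: "rcarrier (T_obj A) = rcarrier A" "rzero (T_obj A) = rzero A"
  "radd (T_obj A) = radd A" "rneg (T_obj A) = rneg A" "rjoin (T_obj A) = rjoin A"
  "rmeet (T_obj A) = rmeet A" "rscal (T_obj A) = rscal A"
  by (simp_all add: T_obj_def)

lemma E_fields[simp]: "rcarrier (E_obj A) = rcarrier A" "rzero (E_obj A) = rzero A"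
  "radd (E_obj A) = radd A" "rneg (E_obj A) = rneg A" "rjoin (E_obj A) = rjoin A"
  "rmeet (E_obj A) = rmeet A" "rscal (E_obj A) = rscal A"
  by (simp_all add: E_obj_def)

lemma rle_T[simp]: "rle (T_obj A) = rle A" by (simp add: rle_def fun_eq_iff)
lemma rle_E[simp]: "rle (E_obj A) = rle A" by (simp add: rle_def fun_eq_iff)
lemma rs_T[simp]: "riesz_space (T_obj A) = riesz_space A" by (simp add: riesz_space_def)
lemma rs_E[simp]: "riesz_space (E_obj A) = riesz_space A" by (simp add: riesz_space_def)
lemma is_sup_T[simp]: "is_sup (T_obj A) = is_sup A" by (simp add: is_sup_def fun_eq_iff)
lemma is_sup_E[simp]: "is_sup (E_obj A) = is_sup A" by (simp add: is_sup_def fun_eq_iff)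
lemma rh_T[simp]: "riesz_hom (T_obj A) (T_obj B) h = riesz_hom A B h" by (simp add: riesz_hom_def)
lemma rh_E[simp]: "riesz_hom (E_obj A) (E_obj B) h = riesz_hom A B h" by (simp add: riesz_hom_def)

lemma V_rs: "V_alg A \<Longrightarrow> riesz_space A" by (simp add: V_alg_def)

lemma V_facts:
  assumes V: "V_alg A" and g: "g \<in> rcarrier A" and f: "range f \<subseteq> rcarrier A"
  shows "vsup A g f \<in> rcarrier A" "vsup A g f = vsup A g (\<lambda>n. rmeet A (f n) g)"
    "vsup A g f = rjoin A (rmeet A (f 0) g) (vsup A g (\<lambda>n. f (Suc n)))"
    "\<And>h. h \<in> rcarrier A \<Longrightarrow> rle A (vsup A g (\<lambda>n. rmeet A (f n) h)) h"
proof -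
  have "\<forall>g\<in>rcarrier A. \<forall>f. range f \<subseteq> rcarrier A \<longrightarrow>
       vsup A g f \<in> rcarrier A \<and>
       vsup A g f = vsup A g (\<lambda>n. rmeet A (f n) g) \<and>
       vsup A g f = rjoin A (rmeet A (f 0) g) (vsup A g (\<lambda>n. f (Suc n))) \<and>
       (\<forall>h\<in>rcarrier A. rle A (vsup A g (\<lambda>n. rmeet A (f n) h)) h)"
    using V unfolding V_alg_def by blast
  then have "vsup A g f \<in> rcarrier A \<and>
       vsup A g f = vsup A g (\<lambda>n. rmeet A (f n) g) \<and>
       vsup A g f = rjoin A (rmeet A (f 0) g) (vsup A g (\<lambda>n. f (Suc n))) \<and>
       (\<forall>h\<in>rcarrier A. rle A (vsup A g (\<lambda>n. rmeet A (f n) h)) h)"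
    using g f by blast
  then show "vsup A g f \<in> rcarrier A" "vsup A g f = vsup A g (\<lambda>n. rmeet A (f n) g)"
    "vsup A g f = rjoin A (rmeet A (f 0) g) (vsup A g (\<lambda>n. f (Suc n)))"
    "\<And>h. h \<in> rcarrier A \<Longrightarrow> rle A (vsup A g (\<lambda>n. rmeet A (f n) h)) h" by auto
qed

lemma V_ub:
  assumes V: "V_alg A" and g: "g \<in> rcarrier A"
  shows "range f \<subseteq> rcarrier A \<Longrightarrow> rle A (rmeet A (f n) g) (vsup A g f)"
proof (induction n arbitrary: f)
  case 0
  have RS: "riesz_space A" using V by (simp add: V_alg_def)
  have r0: "range (\<lambda>n. f (Suc n)) \<subseteq> rcarrier A" using 0 by auto
  have e: "vsup A g f = rjoin A (rmeet A (f 0) g) (vsup A g (\<lambda>n. f (Suc n)))"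
    using V_facts(3)[OF V g 0] .
  have c: "vsup A g (\<lambda>n. f (Suc n)) \<in> rcarrier A"
    using V_facts(1)[OF V g r0] .
  have "f 0 \<in> rcarrier A" using 0 by auto
  then show ?case unfolding e using RS g c by (simp add: jn_ge1 mt_cl)
next
  case (Suc n)
  have RS: "riesz_space A" using V by (simp add: V_alg_def)
  have r: "range (\<lambda>n. f (Suc n)) \<subseteq> rcarrier A" using Suc.prems by auto
  have e: "vsup A g f = rjoin A (rmeet A (f 0) g) (vsup A g (\<lambda>n. f (Suc n)))"
    and c: "vsup A g (\<lambda>n. f (Suc n)) \<in> rcarrier A"
    using V_facts(3)[OF V g Suc.prems] V_facts(1)[OF V g r] by auto
  have f0: "f 0 \<in> rcarrier A" "f (Suc n) \<in> rcarrier A" using Suc.prems by auto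
  have "rle A (rmeet A (f (Suc n)) g) (vsup A g (\<lambda>n. f (Suc n)))" using Suc.IH[OF r] by simp
  moreover have "rle A (vsup A g (\<lambda>n. f (Suc n))) (vsup A g f)"
    unfolding e using RS g c f0 by (simp add: jn_ge2 mt_cl)
  moreover have "vsup A g f \<in> rcarrier A" using V_facts[OF V g Suc.prems] by simp
  ultimately show ?case using RS g c f0 by (meson le_trans mt_cl)
qed

lemma V_is_sup:
  assumes V: "V_alg A" and g: "g \<in> rcarrier A" and f: "range f \<subseteq> rcarrier A"
  shows "is_sup A (range (\<lambda>n. rmeet A (f n) g)) (vsup A g f)"
proof -
  have RS: "riesz_space A" using V by (simp add: V_alg_def)
  have c: "vsup A g f \<in> rcarrier A" using V_facts[OF V g f] by simp
  have least: "rle A (vsup A g f) u" if u: "u \<in> rcarrier A" and ub: "\<forall>n. rle A (rmeet A (f n) g) u" for u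
  proof -
    have f': "range (\<lambda>n. rmeet A (f n) g) \<subseteq> rcarrier A" using f g RS by (auto intro: mt_cl)
    have "rle A (vsup A g (\<lambda>n. rmeet A (rmeet A (f n) g) u)) u"
      using V_facts(4)[OF V g f' u] .
    moreover have "(\<lambda>n. rmeet A (rmeet A (f n) g) u) = (\<lambda>n. rmeet A (f n) g)"
      using ub by (simp add: rle_def)
    moreover have "vsup A g (\<lambda>n. rmeet A (f n) g) = vsup A g f"
      using V_facts(2)[OF V g f] by simp
    ultimately show ?thesis by simp
  qed
  show ?thesis unfolding is_sup_def using c V_ub[OF V g f] least by auto
qed

lemma E_is_sup:
  fixes R :: "'a riesz_struct"
  assumes S: "sigma_riesz R" and g: "g \<in> rcarrier R" and f: "range f \<subseteq> rcarrier R"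
  shows "is_sup R (range (\<lambda>n. rmeet R (f n) g)) (vsup (E_obj R) g f)"
proof -
  have RS: "riesz_space R" and D: "dedekind_sigma_complete R" using S unfolding sigma_riesz_def by simp_all
  have sub: "range (\<lambda>n. rmeet R (f n) g) \<subseteq> rcarrier R" using f g RS by (auto intro: mt_cl)
  have "\<exists>u\<in>rcarrier R. \<forall>x\<in>range (\<lambda>n. rmeet R (f n) g). rle R x u"
  proof
    show "g \<in> rcarrier R" by (rule g)
    show "\<forall>x\<in>range (\<lambda>n. rmeet R (f n) g). rle R x g"
    proof
      fix x assume "x \<in> range (\<lambda>n. rmeet R (f n) g)"
      then obtain n where x: "x = rmeet R (f n) g" by auto
      have "f n \<in> rcarrier R" using f by auto
      then show "rle R x g" using x g RS by (simp add: mt_le2)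
    qed
  qed
  moreover have "countable (range (\<lambda>n. rmeet R (f n) g))" by simp
  moreover have "range (\<lambda>n. rmeet R (f n) g) \<noteq> {}" by simp
  ultimately have "\<exists>s. is_sup R (range (\<lambda>n. rmeet R (f n) g)) s"
    using D sub unfolding dedekind_sigma_complete_def by (elim allE impE) (intro conjI)
  then obtain s where s: "is_sup R (range (\<lambda>n. rmeet R (f n) g)) s" ..
  have "vsup (E_obj R) g f = (THE s. is_sup R (range (\<lambda>n. rmeet R (f n) g)) s)"
    by (simp add: E_obj_def)
  also have "\<dots> = s"
    by (rule the_equality[where P="is_sup R (range (\<lambda>n. rmeet R (f n) g))", OF s],
        rule sup_unique[OF RS], assumption, rule s)
  finally show ?thesis using s by simp
qed

lemma V_T_sigma:
  fixes A :: "'a vsig_struct"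
  assumes V: "V_alg A"
  shows "sigma_riesz (T_obj A)"
proof -
  have RS: "riesz_space A" using V by (simp add: V_alg_def)
  show ?thesis
    unfolding sigma_riesz_def dedekind_sigma_complete_def
  proof (simp add: RS, intro allI impI)
    fix S assume a: "countable S \<and> S \<noteq> {} \<and> S \<subseteq> rcarrier A \<and> (\<exists>u\<in>rcarrier A. \<forall>x\<in>S. rle A x u)"
    then obtain u where u: "u \<in> rcarrier A" "\<forall>x\<in>S. rle A x u" by blast
    define f where "f = from_nat_into S"
    have rf: "range f = S" using a by (simp add: f_def)
    have fC: "range f \<subseteq> rcarrier A" using rf a by simp
    have "rmeet A (f n) u = f n" for n
    proof -
      have "f n \<in> S" using rf by auto
      then show ?thesis using u by (simp add: rle_def)
    qed
    then have "range (\<lambda>n. rmeet A (f n) u) = range f" by simp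
    then have "is_sup A S (vsup A u f)" using V_is_sup[OF V u(1) fC] rf by simp
    then show "\<exists>s. is_sup A S s" by blast
  qed
qed

lemma sc_apply:
  assumes "sigma_continuous R S h" "countable X" "X \<noteq> {}" "X \<subseteq> rcarrier R" "is_sup R X s"
  shows "is_sup S (h ` X) (h s)"
  using assms unfolding sigma_continuous_def by (elim allE[of _ X] allE[of _ s] impE) (intro conjI)

theorem mainTheorem3:
  shows
   \<comment> \<open>T well defined on objects and maps\<close>
   "(\<forall>A :: 'a vsig_struct. V_alg A \<longrightarrow> sigma_riesz (T_obj A)) \<and>
    (\<forall>(A :: 'a vsig_struct) (B :: 'b vsig_struct) h.
        V_alg A \<and> V_alg B \<and> V_hom A B h \<longrightarrow> sigma_riesz_hom (T_obj A) (T_obj B) h) \<and>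
    \<comment> \<open>E well defined on objects and maps\<close>
    (\<forall>R :: 'a riesz_struct. sigma_riesz R \<longrightarrow> V_alg (E_obj R)) \<and>
    (\<forall>(R :: 'a riesz_struct) (S :: 'b riesz_struct) h.
        sigma_riesz R \<and> sigma_riesz S \<and> sigma_riesz_hom R S h \<longrightarrow> V_hom (E_obj R) (E_obj S) h) \<and>
    \<comment> \<open>mutually inverse\<close>
    (\<forall>R :: 'a riesz_struct. sigma_riesz R \<longrightarrow> T_obj (E_obj R) = R) \<and>
    (\<forall>A :: 'a vsig_struct. V_alg A \<longrightarrow>
        T_obj (E_obj (T_obj A)) = T_obj A \<and>
        (\<forall>g\<in>rcarrier A. \<forall>f. range f \<subseteq> rcarrier A \<longrightarrow> vsup (E_obj (T_obj A)) g f = vsup A g f))"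
proof (intro conjI allI impI)
  fix A :: "'a vsig_struct"
  assume V: "V_alg A"
  show "sigma_riesz (T_obj A)" using V_T_sigma[OF V] .
next
  fix A :: "'a vsig_struct" and B :: "'b vsig_struct" and h
  assume a: "V_alg A \<and> V_alg B \<and> V_hom A B h"
  then have VA: "V_alg A" and VB: "V_alg B" and H: "riesz_hom A B h"
    and Hv: "\<forall>g\<in>rcarrier A. \<forall>f. range f \<subseteq> rcarrier A \<longrightarrow> h (vsup A g f) = vsup B (h g) (h \<circ> f)"
    by (auto simp: V_hom_def)
  have RA: "riesz_space A" and RB: "riesz_space B" using VA VB by (auto simp: V_alg_def)
  have "sigma_continuous A B h"
    unfolding sigma_continuous_def
  proof (intro allI impI)
    fix X s assume b: "countable X \<and> X \<noteq> {} \<and> X \<subseteq> rcarrier A \<and> is_sup A X s"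
    define f where "f = from_nat_into X"
    have rf: "range f = X" using b by (simp add: f_def)
    have fC: "range f \<subseteq> rcarrier A" using rf b by simp
    have sC: "s \<in> rcarrier A" and sub: "\<forall>x\<in>X. rle A x s" using b by (auto simp: is_sup_def)
    have "rmeet A (f n) s = f n" for n
    proof -
      have "f n \<in> X" using rf by auto
      then show ?thesis using sub by (simp add: rle_def)
    qed
    then have eq: "range (\<lambda>n. rmeet A (f n) s) = X" using rf by simp
    have "is_sup A X (vsup A s f)" using V_is_sup[OF VA sC fC] eq by simp
    then have vs: "vsup A s f = s" using sup_unique[OF RA] b by blast
    have hf: "range (h \<circ> f) \<subseteq> rcarrier B" using fC H by (auto simp: riesz_hom_def)
    have hs: "h s \<in> rcarrier B" using sC H by (auto simp: riesz_hom_def)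
    have "is_sup B (range (\<lambda>n. rmeet B ((h \<circ> f) n) (h s))) (vsup B (h s) (h \<circ> f))"
      using V_is_sup[OF VB hs hf] .
    moreover have "vsup B (h s) (h \<circ> f) = h s" using Hv sC fC vs by metis
    moreover have "range (\<lambda>n. rmeet B ((h \<circ> f) n) (h s)) = h ` X"
    proof -
      have "rmeet B ((h \<circ> f) n) (h s) = h (rmeet A (f n) s)" for n
      proof -
        have "f n \<in> rcarrier A" using fC by auto
        then show ?thesis using H sC by (auto simp: riesz_hom_def)
      qed
      then have "range (\<lambda>n. rmeet B ((h \<circ> f) n) (h s)) = h ` range (\<lambda>n. rmeet A (f n) s)"
        by (simp add: image_image)
      then show ?thesis using eq by simp
    qed
    ultimately show "is_sup B (h ` X) (h s)" by simp
  qed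
  then show "sigma_riesz_hom (T_obj A) (T_obj B) h"
    using H by (simp add: sigma_riesz_hom_def sigma_continuous_def)
next
  fix R :: "'a riesz_struct"
  assume S: "sigma_riesz R"
  have RS: "riesz_space R" using S by (simp add: sigma_riesz_def)
  show "V_alg (E_obj R)"
    unfolding V_alg_def
  proof (simp add: RS, intro ballI allI impI conjI)
    fix g and f :: "nat \<Rightarrow> _" assume g: "g \<in> rcarrier R" and f: "range f \<subseteq> rcarrier R"
    have s: "is_sup R (range (\<lambda>n. rmeet R (f n) g)) (vsup (E_obj R) g f)"
      using E_is_sup[OF S g f] .
    then show "vsup (E_obj R) g f \<in> rcarrier R" by (simp add: is_sup_def)
    have fn: "f n \<in> rcarrier R" for n using f by auto
    have f1: "range (\<lambda>n. rmeet R (f n) g) \<subseteq> rcarrier R" using fn g RS by (auto intro: mt_cl)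
    have "is_sup R (range (\<lambda>n. rmeet R (rmeet R (f n) g) g)) (vsup (E_obj R) g (\<lambda>n. rmeet R (f n) g))"
      using E_is_sup[OF S g f1] .
    moreover have "(\<lambda>n. rmeet R (rmeet R (f n) g) g) = (\<lambda>n. rmeet R (f n) g)"
      using fn g RS by (simp add: le_mt_eq mt_le2)
    ultimately show "vsup (E_obj R) g f = vsup (E_obj R) g (\<lambda>n. rmeet R (f n) g)"
      using s sup_unique[OF RS] by metis
    fix k assume k: "k \<in> rcarrier R"
    have f2: "range (\<lambda>n. rmeet R (f n) k) \<subseteq> rcarrier R" using fn k RS by (auto intro: mt_cl)
    have s2: "is_sup R (range (\<lambda>n. rmeet R (rmeet R (f n) k) g)) (vsup (E_obj R) g (\<lambda>n. rmeet R (f n) k))"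
      using E_is_sup[OF S g f2] .
    have "\<forall>x\<in>range (\<lambda>n. rmeet R (rmeet R (f n) k) g). rle R x k"
    proof
      fix x assume "x \<in> range (\<lambda>n. rmeet R (rmeet R (f n) k) g)"
      then obtain n where x: "x = rmeet R (rmeet R (f n) k) g" by auto
      have a1: "rle R x (rmeet R (f n) k)" using x fn g k RS by (simp add: mt_le1 mt_cl)
      have a2: "rle R (rmeet R (f n) k) k" using fn k RS by (simp add: mt_le2)
      show "rle R x k" using le_trans[OF RS _ _ k a1 a2] x fn g k RS by (simp add: mt_cl)
    qed
    then show "rle R (vsup (E_obj R) g (\<lambda>n. rmeet R (f n) k)) k"
      using s2 k unfolding is_sup_def by blast
  next
    fix g and f :: "nat \<Rightarrow> _" assume g: "g \<in> rcarrier R" and f: "range f \<subseteq> rcarrier R"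
    have s: "is_sup R (range (\<lambda>n. rmeet R (f n) g)) (vsup (E_obj R) g f)"
      using E_is_sup[OF S g f] .
    have fn: "f n \<in> rcarrier R" for n using f by auto
    have f1: "range (\<lambda>n. f (Suc n)) \<subseteq> rcarrier R" using f by auto
    define t where "t = vsup (E_obj R) g (\<lambda>n. f (Suc n))"
    have t: "is_sup R (range (\<lambda>n. rmeet R (f (Suc n)) g)) t"
      unfolding t_def using E_is_sup[OF S g f1] .
    have tC: "t \<in> rcarrier R" using t by (simp add: is_sup_def)
    have a0: "rmeet R (f 0) g \<in> rcarrier R" using fn g RS by (simp add: mt_cl)
    have "is_sup R (range (\<lambda>n. rmeet R (f n) g)) (rjoin R (rmeet R (f 0) g) t)"
      unfolding is_sup_def
    proof (intro conjI ballI impI)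
      show "rjoin R (rmeet R (f 0) g) t \<in> rcarrier R" using a0 tC RS by (simp add: jn_cl)
    next
      fix x assume "x \<in> range (\<lambda>n. rmeet R (f n) g)"
      then obtain n where x: "x = rmeet R (f n) g" by auto
      show "rle R x (rjoin R (rmeet R (f 0) g) t)"
      proof (cases n)
        case 0 then show ?thesis using x a0 tC RS by (simp add: jn_ge1)
      next
        case (Suc m)
        have "rle R x t" using t x Suc unfolding is_sup_def by auto
        moreover have "rle R t (rjoin R (rmeet R (f 0) g) t)" using a0 tC RS by (simp add: jn_ge2)
        ultimately show ?thesis using x a0 tC RS fn g by (meson jn_cl le_trans mt_cl)
      qed
    next
      fix u assume u: "u \<in> rcarrier R" and ub: "\<forall>x\<in>range (\<lambda>n. rmeet R (f n) g). rle R x u"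
      have "rle R t u" using t u ub unfolding is_sup_def by auto
      moreover have "rle R (rmeet R (f 0) g) u" using ub by auto
      ultimately show "rle R (rjoin R (rmeet R (f 0) g) t) u" using a0 tC u RS by (simp add: jn_least)
    qed
    then show "vsup (E_obj R) g f = rjoin R (rmeet R (f 0) g) (vsup (E_obj R) g (\<lambda>n. f (Suc n)))"
      using s sup_unique[OF RS] t_def by metis
  qed
next
  fix R :: "'a riesz_struct" and S :: "'b riesz_struct" and h
  assume a: "sigma_riesz R \<and> sigma_riesz S \<and> sigma_riesz_hom R S h"
  then have SR: "sigma_riesz R" and SS: "sigma_riesz S" and H: "riesz_hom R S h"
    and Hc: "sigma_continuous R S h" by (auto simp: sigma_riesz_hom_def)
  have RR: "riesz_space R" and RS: "riesz_space S" using SR SS by (auto simp: sigma_riesz_def)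
  show "V_hom (E_obj R) (E_obj S) h"
    unfolding V_hom_def
  proof (simp add: H, intro ballI allI impI)
    fix g and f :: "nat \<Rightarrow> _" assume g: "g \<in> rcarrier R" and f: "range f \<subseteq> rcarrier R"
    have fn: "f n \<in> rcarrier R" for n using f by auto
    have s: "is_sup R (range (\<lambda>n. rmeet R (f n) g)) (vsup (E_obj R) g f)"
      using E_is_sup[OF SR g f] .
    have sub: "range (\<lambda>n. rmeet R (f n) g) \<subseteq> rcarrier R" using fn g RR by (auto intro: mt_cl)
    have "is_sup S (h ` range (\<lambda>n. rmeet R (f n) g)) (h (vsup (E_obj R) g f))"
      by (rule sc_apply[OF Hc _ _ sub s]) simp_all
    moreover have "h ` range (\<lambda>n. rmeet R (f n) g) = range (\<lambda>n. rmeet S ((h \<circ> f) n) (h g))"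
      using H fn g by (auto simp: riesz_hom_def image_image)
    moreover have hg: "h g \<in> rcarrier S" using H g by (simp add: riesz_hom_def)
    moreover have hf: "range (h \<circ> f) \<subseteq> rcarrier S" using H fn by (auto simp: riesz_hom_def)
    ultimately show "h (vsup (E_obj R) g f) = vsup (E_obj S) (h g) (h \<circ> f)"
      using E_is_sup[OF SS hg hf] sup_unique[OF RS] by metis
  qed
next
  fix R :: "'a riesz_struct"
  assume "sigma_riesz R"
  show "T_obj (E_obj R) = R" by (simp add: T_obj_def)
next
  fix A :: "'a vsig_struct"
  assume "V_alg A"
  show "T_obj (E_obj (T_obj A)) = T_obj A" by (simp add: T_obj_def)
next
  fix A :: "'a vsig_struct"
  assume V: "V_alg A"
  have RS: "riesz_space A" using V by (simp add: V_alg_def)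
  have SR: "sigma_riesz (T_obj A)" using V_T_sigma[OF V] .
  show "\<forall>g\<in>rcarrier A. \<forall>f. range f \<subseteq> rcarrier A \<longrightarrow> vsup (E_obj (T_obj A)) g f = vsup A g f"
  proof (intro ballI allI impI)
    fix g and f :: "nat \<Rightarrow> _" assume g: "g \<in> rcarrier A" and f: "range f \<subseteq> rcarrier A"
    have "is_sup A (range (\<lambda>n. rmeet A (f n) g)) (vsup (E_obj (T_obj A)) g f)"
      using E_is_sup[OF SR] g f by simp
    then show "vsup (E_obj (T_obj A)) g f = vsup A g f"
      using V_is_sup[OF V g f] sup_unique[OF RS] by metis
  qed
qed

end
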